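(* Let $\Omega\subset\mathbb{R}^d$ be compact, $\mu$ a probability measure on $\Omega$, and $\Phi_N=\{\varphi_j\}_{j=1}^N\subset\mathcal{C}(\Omega)$ with $\sup_{x\in\Omega}|\varphi_j(x)|\le1$ for $1\le j\le N$. Let $r\ge0$, $A_1^r(\Phi_N):=\{\sum_{j=1}^Nc_j\varphi_j:\sum_{j=1}^N|c_j|j^r\le1\}$, and let $\mathbf{F}\subset\mathcal{C}(\Omega)$ satisfy $\operatorname{dist}(\mathbf{F},A_1^r(\Phi_N))_\infty:=\sup_{f\in\mathbf{F}}\inf_{g\in A_1^r(\Phi_N)}\sup_{x\in\Omega}|f(x)-g(x)|<\infty$. Then for any integer $v$ with $1\le v\le N/2$, any $m\in\mathbb{N}$ and any $\xi=(\xi^1,\dots,\xi^m)\in\Omega^m$, $$\sigma_{2v}(\mathbf{F},\Phi_N)_{L_2(\Omega,\mu_\xi)}\le v^{-r-\frac12}+\operatorname{dist}(\mathbf{F},A_1^r(\Phi_N))_\infty.$$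
   Context: $\mu_\xi=\frac12\mu+\frac1{2m}\sum_{j=1}^m\delta_{\xi^j}$. For $1\le w\le N$, $\Sigma_w(\Phi_N)$ is the union of all spaces $\operatorname{span}\{\varphi_j:j\in J\}$ with $J\subset\{1,\dots,N\}$, $|J|=w$; $\sigma_w(f,\Phi_N)_X=\inf_{g\in\Sigma_w(\Phi_N)}\|f-g\|_X$ and $\sigma_w(\mathbf{F},\Phi_N)_X=\sup_{f\in\mathbf{F}}\sigma_w(f,\Phi_N)_X$. *)

theory Defs
  imports "HOL-Probability.Probability"
begin

definition sup_norm :: "'a set \<Rightarrow> ('a \<Rightarrow> real) \<Rightarrow> ereal" where
  "sup_norm \<Omega> h = (SUP x\<in>\<Omega>. ereal \<bar>h x\<bar>)"

text \<open>L2 norm with respect to mu_xi = 1/2 mu + 1/(2m) sum_{j=1}^m delta_{xi j}, written out.\<close>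
definition L2_mu_xi :: "'a measure \<Rightarrow> nat \<Rightarrow> (nat \<Rightarrow> 'a) \<Rightarrow> ('a \<Rightarrow> real) \<Rightarrow> real" where
  "L2_mu_xi \<mu> m \<xi> h =
     sqrt ((1/2) * (\<integral>x. (h x)\<^sup>2 \<partial>\<mu>) + (1 / (2 * real m)) * (\<Sum>j=1..m. (h (\<xi> j))\<^sup>2))"

definition Sigma_w :: "nat \<Rightarrow> nat \<Rightarrow> (nat \<Rightarrow> 'a \<Rightarrow> real) \<Rightarrow> ('a \<Rightarrow> real) set" where
  "Sigma_w w N \<phi> = (\<Union>J\<in>{J. J \<subseteq> {1..N} \<and> card J = w}. {(\<lambda>x. \<Sum>j\<in>J. c j * \<phi> j x) | c. True})"

definition sigma_w_L2 ::
  "nat \<Rightarrow> nat \<Rightarrow> (nat \<Rightarrow> 'a \<Rightarrow> real) \<Rightarrow> 'a measure \<Rightarrow> nat \<Rightarrow> (nat \<Rightarrow> 'a) \<Rightarrow> ('a \<Rightarrow> real) set \<Rightarrow> ereal" where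
  "sigma_w_L2 w N \<phi> \<mu> m \<xi> F =
     (SUP f\<in>F. INF g\<in>Sigma_w w N \<phi>. ereal (L2_mu_xi \<mu> m \<xi> (\<lambda>x. f x - g x)))"

definition A1r :: "real \<Rightarrow> nat \<Rightarrow> (nat \<Rightarrow> 'a \<Rightarrow> real) \<Rightarrow> ('a \<Rightarrow> real) set" where
  "A1r r N \<phi> = {(\<lambda>x. \<Sum>j=1..N. c j * \<phi> j x) | c. (\<Sum>j=1..N. \<bar>c j\<bar> * real j powr r) \<le> 1}"

definition dist_A1r_inf ::
  "'a set \<Rightarrow> real \<Rightarrow> nat \<Rightarrow> (nat \<Rightarrow> 'a \<Rightarrow> real) \<Rightarrow> ('a \<Rightarrow> real) set \<Rightarrow> ereal" where
  "dist_A1r_inf \<Omega> r N \<phi> F =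
     (SUP f\<in>F. INF g\<in>A1r r N \<phi>. sup_norm \<Omega> (\<lambda>x. f x - g x))"

end

theory Submission
  imports Defs
begin


definition bq :: "'i set \<Rightarrow> ('i \<Rightarrow> 'i \<Rightarrow> real) \<Rightarrow> ('i \<Rightarrow> real) \<Rightarrow> ('i \<Rightarrow> real) \<Rightarrow> real" where
  "bq T G a c = (\<Sum>i\<in>T. \<Sum>j\<in>T. a i * c j * G i j)"

lemma bq_lin1: "bq T G (\<lambda>i. x * a i + y * c i) e = x * bq T G a e + y * bq T G c e"
  unfolding bq_def by (simp add: algebra_simps sum.distrib sum_distrib_left)

lemma bq_lin2: "bq T G e (\<lambda>i. x * a i + y * c i) = x * bq T G e a + y * bq T G e c"
  unfolding bq_def by (simp add: algebra_simps sum.distrib sum_distrib_left)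

lemma bq_sym: assumes "\<And>i j. i \<in> T \<Longrightarrow> j \<in> T \<Longrightarrow> G i j = G j i"
  shows "bq T G a c = bq T G c a"
  unfolding bq_def
  apply (subst sum.swap)
  apply (intro sum.cong refl)
  using assms by (simp add: mult.commute)

lemma bq_delta2: assumes "finite T" "j \<in> T"
  shows "bq T G a (\<lambda>i. if i = j then 1 else 0) = (\<Sum>i\<in>T. a i * G i j)"
  unfolding bq_def using assms by (simp add: if_distrib if_distribR cong: if_cong)

lemma bq_delta_delta: assumes "finite T" "j \<in> T"
  shows "bq T G (\<lambda>i. if i = j then 1 else 0) (\<lambda>i. if i = j then 1 else 0) = G j j"
  using bq_delta2[OF assms] assms by (simp add: if_distrib if_distribR cong: if_cong)

lemma bq_wsum: assumes "finite T"
  shows "(\<Sum>j\<in>T. w j * (\<Sum>i\<in>T. a i * G i j)) = bq T G a w"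
  unfolding bq_def
  apply (subst sum.swap)
  by (simp add: sum_distrib_left algebra_simps)

lemma bq_zero: assumes "\<And>i. i \<in> T \<Longrightarrow> a i = 0" shows "bq T G a a = 0"
  unfolding bq_def using assms by simp

lemma exists_le_avg:
  fixes w E :: "'i \<Rightarrow> real"
  assumes fin: "finite T" and wnn: "\<And>j. j \<in> T \<Longrightarrow> w j \<ge> 0" and Sp: "(\<Sum>j\<in>T. w j) > 0"
    and avg: "(\<Sum>j\<in>T. w j * E j) \<le> (\<Sum>j\<in>T. w j) * B"
  shows "\<exists>j\<in>T. E j \<le> B"
proof (rule ccontr)
  assume "\<not> ?thesis"
  hence gt: "\<And>j. j \<in> T \<Longrightarrow> B < E j" by (simp add: not_le)
  have "\<exists>j\<in>T. w j > 0"
  proof (rule ccontr)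
    assume "\<not> (\<exists>j\<in>T. w j > 0)"
    hence "\<forall>j\<in>T. w j = 0" using wnn by (meson antisym not_le)
    hence "(\<Sum>j\<in>T. w j) = 0" by simp
    thus False using Sp by simp
  qed
  then obtain j0 where j0: "j0 \<in> T" "w j0 > 0" by blast
  have "(\<Sum>j\<in>T. w j * B) < (\<Sum>j\<in>T. w j * E j)"
  proof (rule sum_strict_mono_ex1[OF fin])
    show "\<forall>x\<in>T. w x * B \<le> w x * E x" using gt wnn by (meson less_imp_le mult_left_mono)
    show "\<exists>a\<in>T. w a * B < w a * E a" using j0 gt by (intro bexI[of _ j0]) simp_all
  qed
  moreover have "(\<Sum>j\<in>T. w j * B) = (\<Sum>j\<in>T. w j) * B" by (simp add: sum_distrib_right)
  ultimately show False using avg by linarith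
qed

lemma maurey:
  fixes G :: "'i \<Rightarrow> 'i \<Rightarrow> real"
  assumes fin: "finite T" and Gsym: "\<And>i j. i \<in> T \<Longrightarrow> j \<in> T \<Longrightarrow> G i j = G j i"
    and psd: "\<And>a. bq T G a a \<ge> 0" and diag: "\<And>j. j \<in> T \<Longrightarrow> G j j \<le> 1"
    and wnn: "\<And>j. j \<in> T \<Longrightarrow> w j \<ge> 0"
  shows "\<exists>d. card {i\<in>T. d i \<noteq> 0} \<le> k \<and>
           real k * bq T G (\<lambda>i. w i - d i) (\<lambda>i. w i - d i) \<le> (\<Sum>j\<in>T. w j)\<^sup>2"
proof -
  have bqs: "\<And>a c. bq T G a c = bq T G c a" by (rule bq_sym) (rule Gsym)
  show ?thesis
proof (induction k)
  case 0
  show ?case by (intro exI[of _ "\<lambda>_. 0"]) simp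
next
  case (Suc k)
  define S where "S = (\<Sum>j\<in>T. w j)"
  have S0: "S \<ge> 0" unfolding S_def using wnn by (simp add: sum_nonneg)
  show ?case
  proof (cases "S = 0")
    case True
    hence "\<And>i. i \<in> T \<Longrightarrow> w i = 0" using sum_nonneg_eq_0_iff[OF fin] wnn unfolding S_def by blast
    hence "bq T G (\<lambda>i. w i - 0) (\<lambda>i. w i - 0) = 0" by (intro bq_zero) simp
    thus ?thesis using True S_def by (intro exI[of _ "\<lambda>_. 0"]) simp
  next
    case False
    hence Spos: "S > 0" using S0 by simp
    from Suc.IH obtain d where dcard: "card {i\<in>T. d i \<noteq> 0} \<le> k"
      and dq: "real k * bq T G (\<lambda>i. w i - d i) (\<lambda>i. w i - d i) \<le> S\<^sup>2" unfolding S_def by blast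
    define al where "al = real k / (real k + 1)"
    define be where "be = 1 / (real k + 1)"
    define e where "e = (\<lambda>i. w i - d i)"
    define dl where "dl = (\<lambda>(j::'i) (i::'i). if i = j then 1 else (0::real))"
    define d' where "d' = (\<lambda>j i. al * d i + be * S * dl j i)"
    define E where "E = (\<lambda>j. bq T G (\<lambda>i. w i - d' j i) (\<lambda>i. w i - d' j i))"
    define X where "X = bq T G e e"
    define Y where "Y = bq T G e w"
    define W where "W = bq T G w w"
    define Z where "Z = (\<lambda>j. \<Sum>i\<in>T. e i * G i j)"
    define V where "V = (\<lambda>j. \<Sum>i\<in>T. w i * G i j)"
    have albe: "al + be = 1" unfolding al_def be_def by (simp add: field_simps)
    have Eeq: "E j = al\<^sup>2 * X + 2 * al * be * (Y - S * Z j) + be\<^sup>2 * (W - 2 * S * V j + S\<^sup>2 * G j j)"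
      if j: "j \<in> T" for j
    proof -
      define u where "u = (\<lambda>i. w i - S * dl j i)"
      have l1: "(\<lambda>i. w i - d' j i) = (\<lambda>i. al * e i + be * u i)"
      proof (rule ext)
        fix i
        have h2: "al * w i + be * w i = w i"
        proof -
          have "al * w i + be * w i = (al + be) * w i" by (rule distrib_right[symmetric])
          also have "\<dots> = w i" using albe by simp
          finally show ?thesis .
        qed
        show "w i - d' j i = al * e i + be * u i" unfolding d'_def e_def u_def using h2 by (simp add: algebra_simps)
      qed
      have dd: "bq T G (dl j) (dl j) = G j j" unfolding dl_def by (rule bq_delta_delta[OF fin j])
      have ed: "bq T G e (dl j) = Z j" unfolding dl_def Z_def by (rule bq_delta2[OF fin j])
      have wd: "bq T G w (dl j) = V j" unfolding dl_def V_def by (rule bq_delta2[OF fin j])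
      have dw: "bq T G (dl j) w = V j" using wd bqs by simp
      have ue: "(\<lambda>i. 1 * w i + (- S) * dl j i) = u" unfolding u_def by simp
      have beu: "bq T G e u = Y - S * Z j"
        using bq_lin2[of T G e 1 w "-S" "dl j"] unfolding ue ed Y_def by simp
      have bdu: "bq T G (dl j) u = V j - S * G j j"
        using bq_lin2[of T G "dl j" 1 w "-S" "dl j"] unfolding ue dd dw by simp
      have bwu: "bq T G w u = W - S * V j"
        using bq_lin2[of T G w 1 w "-S" "dl j"] unfolding ue wd W_def by simp
      have qu: "bq T G u u = W - 2 * S * V j + S\<^sup>2 * G j j"
        using bq_lin1[of T G 1 w "-S" "dl j" u] unfolding ue bwu bdu by (simp add: power2_eq_square algebra_simps)
      have l2: "bq T G (\<lambda>i. al * e i + be * u i) (\<lambda>i. al * e i + be * u i)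
          = al * bq T G e (\<lambda>i. al * e i + be * u i) + be * bq T G u (\<lambda>i. al * e i + be * u i)"
        by (rule bq_lin1)
      have l3: "bq T G e (\<lambda>i. al * e i + be * u i) = al * X + be * bq T G e u"
        unfolding X_def by (rule bq_lin2)
      have l4: "bq T G u (\<lambda>i. al * e i + be * u i) = al * bq T G u e + be * bq T G u u"
        by (rule bq_lin2)
      have "E j = bq T G (\<lambda>i. al * e i + be * u i) (\<lambda>i. al * e i + be * u i)"
        unfolding E_def l1 ..
      also have "\<dots> = al * (al * X + be * bq T G e u) + be * (al * bq T G u e + be * bq T G u u)"
        unfolding l2 l3 l4 ..
      also have "bq T G u e = bq T G e u" by (rule bqs)
      finally show ?thesis unfolding beu qu by (simp add: power2_eq_square algebra_simps)
    qed
    have sumZ: "(\<Sum>j\<in>T. w j * Z j) = Y" unfolding Z_def Y_def by (rule bq_wsum[OF fin])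
    have sumV: "(\<Sum>j\<in>T. w j * V j) = W" unfolding V_def W_def by (rule bq_wsum[OF fin])
    have sumG: "(\<Sum>j\<in>T. w j * G j j) \<le> S" unfolding S_def
      by (rule sum_mono) (use diag wnn in \<open>simp add: mult_left_le\<close>)
    have W0: "W \<ge> 0" unfolding W_def by (rule psd)
    have "(\<Sum>j\<in>T. w j * E j) = (\<Sum>j\<in>T. w j * (al\<^sup>2 * X + 2 * al * be * (Y - S * Z j) + be\<^sup>2 * (W - 2 * S * V j + S\<^sup>2 * G j j)))"
      by (rule sum.cong) (auto simp: Eeq)
    also have "\<dots> = S * (al\<^sup>2 * X) + 2 * al * be * (S * Y - S * (\<Sum>j\<in>T. w j * Z j))
        + be\<^sup>2 * (S * W - 2 * S * (\<Sum>j\<in>T. w j * V j) + S\<^sup>2 * (\<Sum>j\<in>T. w j * G j j))"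
    proof -
      have pt: "w j * (al\<^sup>2 * X + 2 * al * be * (Y - S * Z j) + be\<^sup>2 * (W - 2 * S * V j + S\<^sup>2 * G j j))
         = (al\<^sup>2 * X + 2 * al * be * Y + be\<^sup>2 * W) * w j + (- 2 * al * be * S) * (w j * Z j)
           + (- 2 * be\<^sup>2 * S) * (w j * V j) + (be\<^sup>2 * S\<^sup>2) * (w j * G j j)" for j
        by (simp add: algebra_simps)
      have "(\<Sum>j\<in>T. w j * (al\<^sup>2 * X + 2 * al * be * (Y - S * Z j) + be\<^sup>2 * (W - 2 * S * V j + S\<^sup>2 * G j j)))
         = (al\<^sup>2 * X + 2 * al * be * Y + be\<^sup>2 * W) * (\<Sum>j\<in>T. w j) + (- 2 * al * be * S) * (\<Sum>j\<in>T. w j * Z j)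
           + (- 2 * be\<^sup>2 * S) * (\<Sum>j\<in>T. w j * V j) + (be\<^sup>2 * S\<^sup>2) * (\<Sum>j\<in>T. w j * G j j)"
        unfolding pt by (simp add: sum.distrib sum_distrib_left sum_subtractf sum_negf)
      thus ?thesis unfolding S_def by (simp add: algebra_simps)
    qed
    also have "\<dots> = S * (al\<^sup>2 * X) + be\<^sup>2 * (- S * W + S\<^sup>2 * (\<Sum>j\<in>T. w j * G j j))"
      unfolding sumZ sumV by (simp add: algebra_simps)
    also have "\<dots> \<le> S * (al\<^sup>2 * X) + be\<^sup>2 * (S\<^sup>2 * S)"
    proof -
      have a: "S\<^sup>2 * (\<Sum>j\<in>T. w j * G j j) \<le> S\<^sup>2 * S" using sumG by (intro mult_left_mono) auto
      have b: "S * W \<ge> 0" using S0 W0 by simp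
      have "- S * W + S\<^sup>2 * (\<Sum>j\<in>T. w j * G j j) \<le> S\<^sup>2 * S" using a b by linarith
      thus ?thesis by (intro add_left_mono mult_left_mono) auto
    qed
    also have "\<dots> = S * (al\<^sup>2 * X + be\<^sup>2 * S\<^sup>2)" by (simp add: power2_eq_square algebra_simps)
    finally have avg: "(\<Sum>j\<in>T. w j * E j) \<le> (\<Sum>j\<in>T. w j) * (al\<^sup>2 * X + be\<^sup>2 * S\<^sup>2)"
      unfolding S_def by (simp add: mult.commute)
    have Spos': "(\<Sum>j\<in>T. w j) > 0" using Spos unfolding S_def .
    obtain j where j: "j \<in> T" and Ej: "E j \<le> al\<^sup>2 * X + be\<^sup>2 * S\<^sup>2"
      using exists_le_avg[OF fin wnn Spos' avg] by blast
    have kX: "real k * X \<le> S\<^sup>2" using dq unfolding X_def e_def .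
    have X0: "X \<ge> 0" unfolding X_def by (rule psd)
    have "(real k + 1) * E j \<le> (real k + 1) * (al\<^sup>2 * X + be\<^sup>2 * S\<^sup>2)"
      using Ej by simp
    also have "\<dots> = (real k * (real k * X) + S\<^sup>2) / (real k + 1)"
      unfolding al_def be_def by (simp add: power_divide divide_simps power2_eq_square)
    also have "\<dots> \<le> (real k * S\<^sup>2 + S\<^sup>2) / (real k + 1)"
      using kX by (intro divide_right_mono add_right_mono mult_left_mono) auto
    also have "\<dots> = S\<^sup>2" by (simp add: field_simps)
    finally have fin1: "real (Suc k) * E j \<le> S\<^sup>2" by (simp add: add.commute)
    have "{i\<in>T. d' j i \<noteq> 0} \<subseteq> insert j {i\<in>T. d i \<noteq> 0}"
      unfolding d'_def dl_def by auto
    hence "card {i\<in>T. d' j i \<noteq> 0} \<le> card (insert j {i\<in>T. d i \<noteq> 0})"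
      by (intro card_mono) (use fin in auto)
    also have "\<dots> \<le> Suc k" by (rule card_insert_le_m1) (use dcard in auto)
    finally show ?thesis using fin1 unfolding E_def S_def by blast
  qed
qed
qed



definition Bf :: "'a measure \<Rightarrow> nat \<Rightarrow> (nat \<Rightarrow> 'a) \<Rightarrow> ('a \<Rightarrow> real) \<Rightarrow> ('a \<Rightarrow> real) \<Rightarrow> real" where
  "Bf \<mu> m \<xi> h k = (1/2) * (\<integral>x. h x * k x \<partial>\<mu>) + (1 / (2 * real m)) * (\<Sum>l=1..m. h (\<xi> l) * k (\<xi> l))"

definition bm :: "'a measure \<Rightarrow> ('a \<Rightarrow> real) \<Rightarrow> bool" where
  "bm \<mu> h = (h \<in> borel_measurable \<mu> \<and> (\<exists>B\<ge>0. \<forall>x\<in>space \<mu>. \<bar>h x\<bar> \<le> B))"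

lemma L2_eq: "L2_mu_xi \<mu> m \<xi> h = sqrt (Bf \<mu> m \<xi> h h)"
  unfolding L2_mu_xi_def Bf_def by (simp add: power2_eq_square)

lemma bm_integrable: assumes "prob_space \<mu>" "bm \<mu> h" shows "integrable \<mu> h"
proof -
  interpret prob_space \<mu> by fact
  from assms(2) obtain B where B: "\<forall>x\<in>space \<mu>. \<bar>h x\<bar> \<le> B" and m: "h \<in> borel_measurable \<mu>"
    unfolding bm_def by blast
  show ?thesis by (rule integrable_const_bound[where B=B]) (use B m in auto)
qed

lemma bm_mult: assumes "bm \<mu> h" "bm \<mu> k" shows "bm \<mu> (\<lambda>x. h x * k x)"
proof -
  from assms obtain B1 B2 where B1: "B1 \<ge> 0" "\<forall>x\<in>space \<mu>. \<bar>h x\<bar> \<le> B1"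
    and B2: "B2 \<ge> 0" "\<forall>x\<in>space \<mu>. \<bar>k x\<bar> \<le> B2"
    and m: "h \<in> borel_measurable \<mu>" "k \<in> borel_measurable \<mu>" unfolding bm_def by blast
  have "\<forall>x\<in>space \<mu>. \<bar>h x * k x\<bar> \<le> B1 * B2"
    using B1 B2 by (auto simp: abs_mult intro!: mult_mono)
  moreover have "(\<lambda>x. h x * k x) \<in> borel_measurable \<mu>" using m by measurable
  ultimately show ?thesis unfolding bm_def using B1 B2 by (meson mult_nonneg_nonneg)
qed

lemma bm_add: assumes "bm \<mu> h" "bm \<mu> k" shows "bm \<mu> (\<lambda>x. h x + k x)"
proof -
  from assms obtain B1 B2 where B1: "B1 \<ge> 0" "\<forall>x\<in>space \<mu>. \<bar>h x\<bar> \<le> B1"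
    and B2: "B2 \<ge> 0" "\<forall>x\<in>space \<mu>. \<bar>k x\<bar> \<le> B2"
    and m: "h \<in> borel_measurable \<mu>" "k \<in> borel_measurable \<mu>" unfolding bm_def by blast
  have "\<forall>x\<in>space \<mu>. \<bar>h x + k x\<bar> \<le> B1 + B2"
    using B1 B2 by (auto intro: order_trans[OF abs_triangle_ineq] add_mono)
  moreover have "(\<lambda>x. h x + k x) \<in> borel_measurable \<mu>" using m by measurable
  ultimately show ?thesis unfolding bm_def using B1 B2 by (meson add_nonneg_nonneg)
qed

lemma bm_const: "bm \<mu> (\<lambda>x. c)"
  unfolding bm_def by (intro conjI exI[of _ "\<bar>c\<bar>"]) auto

lemma bm_scale: assumes "bm \<mu> h" shows "bm \<mu> (\<lambda>x. c * h x)"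
  using bm_mult[OF bm_const assms] .

lemma bm_minus: assumes "bm \<mu> h" "bm \<mu> k" shows "bm \<mu> (\<lambda>x. h x - k x)"
  using bm_add[OF assms(1) bm_scale[OF assms(2), of "-1"]] by simp

lemma bm_sum: assumes "finite T" "\<And>i. i \<in> T \<Longrightarrow> bm \<mu> (u i)"
  shows "bm \<mu> (\<lambda>x. \<Sum>i\<in>T. a i * u i x)"
  using assms
proof (induction T rule: finite_induct)
  case empty
  then show ?case using bm_const[of \<mu> 0] by simp
next
  case (insert j T)
  have "bm \<mu> (\<lambda>x. a j * u j x + (\<Sum>i\<in>T. a i * u i x))"
    using insert by (intro bm_add bm_scale) auto
  thus ?case using insert by simp
qed

lemma Bf_sym: "Bf \<mu> m \<xi> h k = Bf \<mu> m \<xi> k h"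
  unfolding Bf_def by (simp add: mult.commute)

lemma Bf_sum_left:
  assumes P: "prob_space \<mu>" and fin: "finite T" and u: "\<And>i. i \<in> T \<Longrightarrow> bm \<mu> (u i)" and k: "bm \<mu> k"
  shows "Bf \<mu> m \<xi> (\<lambda>x. \<Sum>i\<in>T. a i * u i x) k = (\<Sum>i\<in>T. a i * Bf \<mu> m \<xi> (u i) k)"
proof -
  have int: "integrable \<mu> (\<lambda>x. u i x * k x)" if "i \<in> T" for i
    using bm_integrable[OF P bm_mult[OF u[OF that] k]] .
  have "(\<integral>x. (\<Sum>i\<in>T. a i * u i x) * k x \<partial>\<mu>) = (\<integral>x. (\<Sum>i\<in>T. a i * (u i x * k x)) \<partial>\<mu>)"
    by (simp add: sum_distrib_right mult.assoc)
  also have "\<dots> = (\<Sum>i\<in>T. a i * (\<integral>x. u i x * k x \<partial>\<mu>))"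
    by (subst Bochner_Integration.integral_sum) (use int in auto)
  finally have I: "(\<integral>x. (\<Sum>i\<in>T. a i * u i x) * k x \<partial>\<mu>) = (\<Sum>i\<in>T. a i * (\<integral>x. u i x * k x \<partial>\<mu>))" .
  have S: "(\<Sum>l=1..m. (\<Sum>i\<in>T. a i * u i (\<xi> l)) * k (\<xi> l)) = (\<Sum>i\<in>T. a i * (\<Sum>l=1..m. u i (\<xi> l) * k (\<xi> l)))"
    by (simp add: sum_distrib_right sum_distrib_left mult.assoc) (rule sum.swap)
  show ?thesis unfolding Bf_def I S
    by (simp add: sum_distrib_left sum.distrib algebra_simps)
qed

lemma gram:
  assumes P: "prob_space \<mu>" and fin: "finite T" and u: "\<And>i. i \<in> T \<Longrightarrow> bm \<mu> (u i)"
  shows "Bf \<mu> m \<xi> (\<lambda>x. \<Sum>i\<in>T. a i * u i x) (\<lambda>x. \<Sum>i\<in>T. a i * u i x)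
         = (\<Sum>i\<in>T. \<Sum>j\<in>T. a i * a j * Bf \<mu> m \<xi> (u i) (u j))"
proof -
  have k: "bm \<mu> (\<lambda>x. \<Sum>i\<in>T. a i * u i x)" by (rule bm_sum[OF fin u])
  have "Bf \<mu> m \<xi> (\<lambda>x. \<Sum>i\<in>T. a i * u i x) (\<lambda>x. \<Sum>i\<in>T. a i * u i x)
     = (\<Sum>i\<in>T. a i * Bf \<mu> m \<xi> (u i) (\<lambda>x. \<Sum>i\<in>T. a i * u i x))"
    by (rule Bf_sum_left[OF P fin u k])
  also have "\<dots> = (\<Sum>i\<in>T. a i * (\<Sum>j\<in>T. a j * Bf \<mu> m \<xi> (u j) (u i)))"
  proof (rule sum.cong[OF refl])
    fix i assume i: "i \<in> T"
    show "a i * Bf \<mu> m \<xi> (u i) (\<lambda>x. \<Sum>i\<in>T. a i * u i x) = a i * (\<Sum>j\<in>T. a j * Bf \<mu> m \<xi> (u j) (u i))"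
      by (subst Bf_sym) (simp add: Bf_sum_left[OF P fin u u[OF i]])
  qed
  also have "\<dots> = (\<Sum>i\<in>T. \<Sum>j\<in>T. a i * a j * Bf \<mu> m \<xi> (u i) (u j))"
    by (simp add: sum_distrib_left mult.assoc Bf_sym[of \<mu> m \<xi> "u i" "u j" for i j])
  finally show ?thesis .
qed

lemma Bf_nonneg: "Bf \<mu> m \<xi> h h \<ge> 0"
proof -
  have "(\<integral>x. h x * h x \<partial>\<mu>) \<ge> 0" by (rule integral_nonneg_AE) auto
  moreover have "(\<Sum>l=1..m. h (\<xi> l) * h (\<xi> l)) \<ge> 0" by (rule sum_nonneg) auto
  ultimately show ?thesis unfolding Bf_def by simp
qed

lemma Bf_le1:
  assumes P: "prob_space \<mu>" and h: "bm \<mu> h" and b: "\<And>x. x \<in> space \<mu> \<Longrightarrow> \<bar>h x\<bar> \<le> 1"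
    and xi: "\<And>l. l \<in> {1..m} \<Longrightarrow> \<xi> l \<in> space \<mu>" and m: "m \<ge> 1"
  shows "Bf \<mu> m \<xi> h h \<le> 1"
proof -
  interpret prob_space \<mu> by fact
  have sq: "h x * h x \<le> 1" if "x \<in> space \<mu>" for x
  proof -
    have "\<bar>h x\<bar> * \<bar>h x\<bar> \<le> 1 * 1" using b[OF that] by (intro mult_mono) auto
    thus ?thesis by (simp add: abs_mult[symmetric])
  qed
  have "(\<integral>x. h x * h x \<partial>\<mu>) \<le> (\<integral>x. 1 \<partial>\<mu>)"
    by (rule integral_mono) (use bm_integrable[OF P bm_mult[OF h h]] sq in auto)
  hence I: "(\<integral>x. h x * h x \<partial>\<mu>) \<le> 1" by (simp add: prob_space)
  have "(\<Sum>l=1..m. h (\<xi> l) * h (\<xi> l)) \<le> (\<Sum>l=1..m. 1)" by (rule sum_mono) (use sq xi in auto)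
  hence S: "(\<Sum>l=1..m. h (\<xi> l) * h (\<xi> l)) \<le> real m" by simp
  have "(1 / (2 * real m)) * (\<Sum>l=1..m. h (\<xi> l) * h (\<xi> l)) \<le> (1 / (2 * real m)) * real m"
    using S by (intro mult_left_mono) auto
  also have "\<dots> = 1/2" using m by simp
  finally show ?thesis unfolding Bf_def using I by linarith
qed

lemma L2_triangle:
  assumes P: "prob_space \<mu>" and u: "bm \<mu> u" and w: "bm \<mu> w" and s: "s \<ge> 0"
    and ub: "\<And>x. x \<in> space \<mu> \<Longrightarrow> \<bar>u x\<bar> \<le> s"
    and xi: "\<And>l. l \<in> {1..m} \<Longrightarrow> \<xi> l \<in> space \<mu>" and m: "m \<ge> 1"
  shows "L2_mu_xi \<mu> m \<xi> (\<lambda>x. u x + w x) \<le> s + L2_mu_xi \<mu> m \<xi> w"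
proof -
  interpret prob_space \<mu> by fact
  have pw: "(u x + w x) * (u x + w x) \<le> s * s + 2 * s * \<bar>w x\<bar> + w x * w x" if x: "x \<in> space \<mu>" for x
  proof -
    have "\<bar>u x\<bar> * \<bar>u x\<bar> \<le> s * s" using ub[OF x] by (intro mult_mono) auto
    hence uu: "u x * u x \<le> s * s" by (simp add: abs_mult[symmetric])
    have "u x * w x \<le> \<bar>u x\<bar> * \<bar>w x\<bar>" by (simp add: abs_mult[symmetric])
    also have "\<dots> \<le> s * \<bar>w x\<bar>" using ub[OF x] by (intro mult_right_mono) auto
    finally have uw: "u x * w x \<le> s * \<bar>w x\<bar>" .
    have "(u x + w x) * (u x + w x) = u x * u x + 2 * (u x * w x) + w x * w x" by algebra
    thus ?thesis using uu uw by linarith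
  qed
  have iw: "integrable \<mu> w" by (rule bm_integrable[OF P w])
  have iabs: "integrable \<mu> (\<lambda>x. \<bar>w x\<bar>)" using iw by (rule integrable_abs)
  have iww: "integrable \<mu> (\<lambda>x. w x * w x)" by (rule bm_integrable[OF P bm_mult[OF w w]])
  have iuw: "integrable \<mu> (\<lambda>x. (u x + w x) * (u x + w x))"
    by (rule bm_integrable[OF P bm_mult[OF bm_add[OF u w] bm_add[OF u w]]])
  define A where "A = (\<integral>x. \<bar>w x\<bar> \<partial>\<mu>)"
  define I2 where "I2 = (\<integral>x. w x * w x \<partial>\<mu>)"
  define Bs where "Bs = (\<Sum>l=1..m. \<bar>w (\<xi> l)\<bar>)"
  define Ws where "Ws = (\<Sum>l=1..m. w (\<xi> l) * w (\<xi> l))"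
  define c where "c = 1 / (2 * real m)"
  have mpos: "real m > 0" using m by simp
  have I: "(\<integral>x. (u x + w x) * (u x + w x) \<partial>\<mu>) \<le> s * s + 2 * s * A + I2"
  proof -
    have "(\<integral>x. (u x + w x) * (u x + w x) \<partial>\<mu>) \<le> (\<integral>x. s * s + 2 * s * \<bar>w x\<bar> + w x * w x \<partial>\<mu>)"
      by (rule integral_mono) (use iuw iabs iww pw in auto)
    also have "\<dots> = s * s + 2 * s * A + I2" unfolding A_def I2_def
      using iabs iww by (simp add: prob_space)
    finally show ?thesis .
  qed
  have S: "(\<Sum>l=1..m. (u (\<xi> l) + w (\<xi> l)) * (u (\<xi> l) + w (\<xi> l))) \<le> real m * (s * s) + 2 * s * Bs + Ws"
  proof -
    have "(\<Sum>l=1..m. (u (\<xi> l) + w (\<xi> l)) * (u (\<xi> l) + w (\<xi> l)))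
        \<le> (\<Sum>l=1..m. s * s + 2 * s * \<bar>w (\<xi> l)\<bar> + w (\<xi> l) * w (\<xi> l))"
      by (rule sum_mono) (use pw xi in auto)
    also have "\<dots> = real m * (s * s) + 2 * s * Bs + Ws" unfolding Bs_def Ws_def
      by (simp add: sum.distrib sum_distrib_left)
    finally show ?thesis .
  qed
  define M1 where "M1 = (1/2) * A + c * Bs"
  have Qw: "Bf \<mu> m \<xi> w w = (1/2) * I2 + c * Ws" unfolding Bf_def I2_def Ws_def c_def ..
  have cm: "c * real m = 1/2" unfolding c_def using mpos by simp
  have c0: "c \<ge> 0" unfolding c_def by simp
  have Q1: "Bf \<mu> m \<xi> (\<lambda>x. u x + w x) (\<lambda>x. u x + w x) \<le> s * s + 2 * s * M1 + Bf \<mu> m \<xi> w w"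
  proof -
    have "Bf \<mu> m \<xi> (\<lambda>x. u x + w x) (\<lambda>x. u x + w x)
       \<le> (1/2) * (s * s + 2 * s * A + I2) + c * (real m * (s * s) + 2 * s * Bs + Ws)"
      unfolding Bf_def c_def[symmetric] using I S c0 by (intro add_mono mult_left_mono) auto
    also have "\<dots> = s * s + 2 * s * M1 + Bf \<mu> m \<xi> w w"
    proof -
      have cm2: "c * (real m * (s * s)) = (1/2) * (s * s)" using cm by (metis mult.assoc)
      have "(1/2) * (s * s + 2 * s * A + I2) + c * (real m * (s * s) + 2 * s * Bs + Ws)
         = (1/2) * (s * s) + c * (real m * (s * s)) + 2 * s * ((1/2) * A + c * Bs) + ((1/2) * I2 + c * Ws)"
        by (simp add: algebra_simps)
      thus ?thesis unfolding Qw M1_def using cm2 by linarith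
    qed
    finally show ?thesis .
  qed
  have AI: "A\<^sup>2 \<le> I2"
  proof -
    have "variance (\<lambda>x. \<bar>w x\<bar>) = expectation (\<lambda>x. (\<bar>w x\<bar>)\<^sup>2) - (expectation (\<lambda>x. \<bar>w x\<bar>))\<^sup>2"
      by (rule variance_eq) (use iabs iww in \<open>auto simp: power2_eq_square\<close>)
    moreover have "variance (\<lambda>x. \<bar>w x\<bar>) \<ge> 0" by (rule variance_positive)
    ultimately show ?thesis unfolding A_def I2_def by (simp add: power2_eq_square)
  qed
  have BW: "Bs\<^sup>2 \<le> Ws * real m"
  proof -
    have "(\<Sum>l=1..m. \<bar>w (\<xi> l)\<bar> * 1)\<^sup>2 \<le> (\<Sum>l=1..m. (\<bar>w (\<xi> l)\<bar>)\<^sup>2) * (\<Sum>l=1..m. 1\<^sup>2)"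
      by (rule Cauchy_Schwarz_ineq_sum)
    thus ?thesis unfolding Bs_def Ws_def by (simp add: power2_eq_square)
  qed
  have A0: "A \<ge> 0" unfolding A_def by (rule integral_nonneg_AE) auto
  have B0: "Bs \<ge> 0" unfolding Bs_def by (rule sum_nonneg) auto
  have M0: "M1 \<ge> 0" unfolding M1_def using A0 B0 c0 by simp
  have "M1\<^sup>2 \<le> Bf \<mu> m \<xi> w w"
  proof -
    define y where "y = Bs / real m"
    have cB: "c * Bs = (1/2) * y" unfolding c_def y_def by simp
    have y2: "y\<^sup>2 \<le> Ws / real m" unfolding y_def using BW mpos
      by (simp add: power_divide divide_simps power2_eq_square) 
    have "M1\<^sup>2 = ((1/2) * A + (1/2) * y)\<^sup>2" unfolding M1_def cB ..
    also have "\<dots> \<le> (1/2) * A\<^sup>2 + (1/2) * y\<^sup>2"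
    proof -
      have "0 \<le> (A - y)\<^sup>2" by simp
      thus ?thesis by (simp add: power2_eq_square algebra_simps)
    qed
    also have "\<dots> \<le> (1/2) * I2 + (1/2) * (Ws / real m)" using AI y2 by simp
    also have "\<dots> = Bf \<mu> m \<xi> w w" unfolding Qw c_def by simp
    finally show ?thesis .
  qed
  hence M1L: "M1 \<le> sqrt (Bf \<mu> m \<xi> w w)" using M0 by (simp add: real_le_rsqrt)
  have sM: "s * M1 \<le> s * sqrt (Bf \<mu> m \<xi> w w)" using M1L s by (rule mult_left_mono)
  have sq: "sqrt (Bf \<mu> m \<xi> w w) * sqrt (Bf \<mu> m \<xi> w w) = Bf \<mu> m \<xi> w w"
    using Bf_nonneg[of \<mu> m \<xi> w] by simp
  have ex: "(s + sqrt (Bf \<mu> m \<xi> w w))\<^sup>2 = s * s + 2 * (s * sqrt (Bf \<mu> m \<xi> w w))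
      + sqrt (Bf \<mu> m \<xi> w w) * sqrt (Bf \<mu> m \<xi> w w)" by (simp add: power2_eq_square algebra_simps)
  have "Bf \<mu> m \<xi> (\<lambda>x. u x + w x) (\<lambda>x. u x + w x) \<le> (s + sqrt (Bf \<mu> m \<xi> w w))\<^sup>2"
    unfolding ex sq using Q1 sM by linarith
  from real_sqrt_le_mono[OF this]
  have "sqrt (Bf \<mu> m \<xi> (\<lambda>x. u x + w x) (\<lambda>x. u x + w x)) \<le> s + sqrt (Bf \<mu> m \<xi> w w)"
    using s Bf_nonneg[of \<mu> m \<xi> w] by simp
  thus ?thesis unfolding L2_eq .
qed

lemma cont_bm:
  fixes f :: "'a::topological_space \<Rightarrow> real"
  assumes "compact \<Omega>" "space \<mu> = \<Omega>" "sets \<mu> = sets (restrict_space borel \<Omega>)" "continuous_on \<Omega> f"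
  shows "bm \<mu> f"
proof -
  have "f \<in> borel_measurable (restrict_space borel \<Omega>)"
    by (rule borel_measurable_continuous_on_restrict) fact
  moreover have "(borel_measurable \<mu> :: ('a \<Rightarrow> real) set) = borel_measurable (restrict_space borel \<Omega>)"
    by (rule measurable_cong_sets[OF assms(3) refl])
  ultimately have meas: "f \<in> borel_measurable \<mu>" by (simp only:)
  have "compact (f ` \<Omega>)" using compact_continuous_image assms(1,4) by blast
  hence "bounded (f ` \<Omega>)" by (rule compact_imp_bounded)
  then obtain B where B: "\<forall>y\<in>f ` \<Omega>. norm y \<le> B" unfolding bounded_iff by blast
  have "\<forall>x\<in>space \<mu>. \<bar>f x\<bar> \<le> max B 0" using B assms(2) by fastforce
  thus ?thesis unfolding bm_def using meas by (intro conjI exI[of _ "max B 0"]) auto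
qed

lemma approx:
  fixes \<mu> :: "'a measure" and \<phi> :: "nat \<Rightarrow> 'a \<Rightarrow> real"
  assumes P: "prob_space \<mu>"
    and phib: "\<And>j. j \<in> {1..N} \<Longrightarrow> bm \<mu> (\<phi> j)"
    and phi1: "\<And>j x. j \<in> {1..N} \<Longrightarrow> x \<in> space \<mu> \<Longrightarrow> \<bar>\<phi> j x\<bar> \<le> 1"
    and r: "r \<ge> 0" and v: "1 \<le> v" "2 * v \<le> N"
    and m: "1 \<le> m" and xi: "\<And>l. l \<in> {1..m} \<Longrightarrow> \<xi> l \<in> space \<mu>"
    and g: "g \<in> A1r r N \<phi>"
  shows "\<exists>h\<in>Sigma_w (2 * v) N \<phi>. bm \<mu> g \<and> bm \<mu> h \<and>
           L2_mu_xi \<mu> m \<xi> (\<lambda>x. g x - h x) \<le> real v powr (- r - 1/2)"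
proof -
  from g obtain c where gc: "g = (\<lambda>x. \<Sum>j=1..N. c j * \<phi> j x)"
    and cr: "(\<Sum>j=1..N. \<bar>c j\<bar> * real j powr r) \<le> 1"
    unfolding A1r_def by blast
  define H where "H = {1..v}"
  define T where "T = {v+1..N}"
  have HT: "{1..N} = H \<union> T" "H \<inter> T = {}" "finite H" "finite T"
    unfolding H_def T_def using v by auto
  define w where "w = (\<lambda>j. \<bar>c j\<bar>)"
  define u where "u = (\<lambda>j x. sgn (c j) * \<phi> j x)"
  have cwu: "c j * \<phi> j x = w j * u j x" for j x
    unfolding w_def u_def by (simp add: abs_mult_sgn mult.assoc[symmetric])
  have ub: "bm \<mu> (u j)" if "j \<in> T" for j
    unfolding u_def using that HT by (intro bm_scale phib) auto
  have u1: "\<bar>u j x\<bar> \<le> 1" if "j \<in> T" "x \<in> space \<mu>" for j x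
  proof -
    have "\<bar>u j x\<bar> = \<bar>sgn (c j)\<bar> * \<bar>\<phi> j x\<bar>" unfolding u_def by (simp add: abs_mult)
    also have "\<dots> \<le> 1 * 1" using phi1[of j x] that HT by (intro mult_mono) (auto simp: abs_sgn_eq)
    finally show ?thesis by simp
  qed
  define G where "G = (\<lambda>i j. Bf \<mu> m \<xi> (u i) (u j))"
  have Gsym: "G i j = G j i" for i j unfolding G_def by (rule Bf_sym)
  have gramT: "Bf \<mu> m \<xi> (\<lambda>x. \<Sum>i\<in>T. a i * u i x) (\<lambda>x. \<Sum>i\<in>T. a i * u i x) = bq T G a a" for a
    unfolding bq_def G_def by (rule gram[OF P HT(4) ub])
  have psd: "bq T G a a \<ge> 0" for a unfolding gramT[symmetric] by (rule Bf_nonneg)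
  have diag: "G j j \<le> 1" if "j \<in> T" for j
    unfolding G_def by (rule Bf_le1[OF P ub[OF that] u1[OF that] xi m]) auto
  obtain d where dcard: "card {i\<in>T. d i \<noteq> 0} \<le> v"
    and dq: "real v * bq T G (\<lambda>i. w i - d i) (\<lambda>i. w i - d i) \<le> (\<Sum>j\<in>T. w j)\<^sup>2"
    using maurey[OF HT(4) Gsym psd diag, of w v] unfolding w_def by auto
  define S where "S = (\<Sum>j\<in>T. w j)"
  have S0: "S \<ge> 0" unfolding S_def w_def by (simp add: sum_nonneg)
  have vpos: "real v > 0" using v by simp
  have Sle: "S * real v powr r \<le> 1"
  proof -
    have "S * real v powr r = (\<Sum>j\<in>T. w j * real v powr r)" unfolding S_def by (simp add: sum_distrib_right)
    also have "\<dots> \<le> (\<Sum>j\<in>T. \<bar>c j\<bar> * real j powr r)"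
      unfolding w_def T_def by (rule sum_mono) (auto intro!: mult_left_mono powr_mono2 r)
    also have "\<dots> \<le> (\<Sum>j=1..N. \<bar>c j\<bar> * real j powr r)"
      by (rule sum_mono2) (auto simp: T_def)
    finally show ?thesis using cr by linarith
  qed
  have Sle2: "S \<le> real v powr (- r)"
    using Sle vpos by (simp add: powr_minus_divide divide_simps mult.commute)
  define q where "q = bq T G (\<lambda>i. w i - d i) (\<lambda>i. w i - d i)"
  have q0: "q \<ge> 0" unfolding q_def by (rule psd)
  have qle: "q \<le> S\<^sup>2 / real v" using dq vpos unfolding q_def S_def by (simp add: divide_simps mult.commute)
  have sqq: "sqrt q \<le> S / sqrt (real v)"
  proof -
    have "sqrt q \<le> sqrt (S\<^sup>2 / real v)" using qle by (rule real_sqrt_le_mono)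
    also have "\<dots> = S / sqrt (real v)" using S0 by (simp add: real_sqrt_divide)
    finally show ?thesis .
  qed
  also have "\<dots> \<le> real v powr (- r) / sqrt (real v)"
    using Sle2 vpos by (simp add: divide_right_mono)
  also have "\<dots> = real v powr (- r - 1/2)"
    using vpos by (simp add: powr_diff powr_half_sqrt)
  finally have sq_le: "sqrt q \<le> real v powr (- r - 1/2)" .
  define e where "e = (\<lambda>j. if j \<in> H then c j else if j \<in> T then d j * sgn (c j) else 0)"
  define h where "h = (\<lambda>x. (\<Sum>j\<in>H. c j * \<phi> j x) + (\<Sum>j\<in>T. d j * u j x))"
  have gsplit: "g x = (\<Sum>j\<in>H. c j * \<phi> j x) + (\<Sum>j\<in>T. w j * u j x)" for x
    unfolding gc HT(1) by (simp add: sum.union_disjoint[OF HT(3) HT(4) HT(2)] cwu)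
  have gh: "(\<lambda>x. g x - h x) = (\<lambda>x. \<Sum>i\<in>T. (w i - d i) * u i x)"
    unfolding h_def by (rule ext) (simp add: gsplit left_diff_distrib sum_subtractf)
  have L2gh: "L2_mu_xi \<mu> m \<xi> (\<lambda>x. g x - h x) = sqrt q"
    unfolding gh L2_eq gramT q_def ..
  have bmg: "bm \<mu> g" unfolding gc by (rule bm_sum) (use phib in auto)
  have bmh: "bm \<mu> h" unfolding h_def
    by (intro bm_add bm_sum) (use phib ub HT v in \<open>auto simp: H_def\<close>)
  have he: "h x = (\<Sum>j=1..N. e j * \<phi> j x)" for x
  proof -
    have "(\<Sum>j=1..N. e j * \<phi> j x) = (\<Sum>j\<in>H. e j * \<phi> j x) + (\<Sum>j\<in>T. e j * \<phi> j x)"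
      unfolding HT(1) by (rule sum.union_disjoint[OF HT(3) HT(4) HT(2)])
    also have "(\<Sum>j\<in>H. e j * \<phi> j x) = (\<Sum>j\<in>H. c j * \<phi> j x)"
      by (rule sum.cong) (auto simp: e_def)
    also have "(\<Sum>j\<in>T. e j * \<phi> j x) = (\<Sum>j\<in>T. d j * u j x)"
      by (rule sum.cong) (use HT(2) in \<open>auto simp: e_def u_def\<close>)
    finally show ?thesis unfolding h_def by simp
  qed
  define K where "K = H \<union> {i\<in>T. d i \<noteq> 0}"
  have cardK: "card K \<le> 2 * v"
  proof -
    have "card K \<le> card H + card {i\<in>T. d i \<noteq> 0}" unfolding K_def by (rule card_Un_le)
    also have "\<dots> \<le> v + v" using dcard unfolding H_def by simp
    finally show ?thesis by simp
  qed
  have KN: "K \<subseteq> {1..N}" unfolding K_def HT(1) by auto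
  obtain J where J: "K \<subseteq> J" "J \<subseteq> {1..N}" "card J = 2 * v"
    using exists_subset_between[OF cardK _ KN] v by auto
  have hJ: "h = (\<lambda>x. \<Sum>j\<in>J. e j * \<phi> j x)"
  proof (rule ext)
    fix x
    have "(\<Sum>j=1..N. e j * \<phi> j x) = (\<Sum>j\<in>J. e j * \<phi> j x)"
    proof (rule sum.mono_neutral_right)
      show "\<forall>i\<in>{1..N} - J. e i * \<phi> i x = 0"
      proof
        fix i assume i: "i \<in> {1..N} - J"
        hence "i \<notin> K" using J by auto
        hence "e i = 0" using i unfolding e_def K_def HT(1) by auto
        thus "e i * \<phi> i x = 0" by simp
      qed
    qed (use J in auto)
    thus "h x = (\<Sum>j\<in>J. e j * \<phi> j x)" using he by simp
  qed
  have "h \<in> Sigma_w (2 * v) N \<phi>"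
    unfolding Sigma_w_def hJ using J by blast
  thus ?thesis using bmg bmh L2gh sq_le by auto
qed

lemma sup_norm_nonneg: "x \<in> \<Omega> \<Longrightarrow> sup_norm \<Omega> h \<ge> 0"
proof -
  assume x: "x \<in> \<Omega>"
  have "ereal \<bar>h x\<bar> \<le> sup_norm \<Omega> h" unfolding sup_norm_def using x by (rule SUP_upper)
  moreover have "ereal 0 \<le> ereal \<bar>h x\<bar>" by simp
  ultimately show ?thesis by (metis order_trans zero_ereal_def)
qed

lemma sup_norm_bound: "x \<in> \<Omega> \<Longrightarrow> sup_norm \<Omega> h = ereal s \<Longrightarrow> \<bar>h x\<bar> \<le> s"
proof -
  assume x: "x \<in> \<Omega>" and e: "sup_norm \<Omega> h = ereal s"
  have "ereal \<bar>h x\<bar> \<le> sup_norm \<Omega> h" unfolding sup_norm_def using x by (rule SUP_upper)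
  thus ?thesis using e by simp
qed

theorem proposition3p1:
  fixes \<Omega> :: "(real^'d) set" and \<mu> :: "(real^'d) measure"
    and \<phi> :: "nat \<Rightarrow> real^'d \<Rightarrow> real" and N :: nat and r :: real
    and F :: "(real^'d \<Rightarrow> real) set" and v m :: nat and \<xi> :: "nat \<Rightarrow> real^'d"
  assumes "compact \<Omega>"
    and "prob_space \<mu>" and "space \<mu> = \<Omega>" and "sets \<mu> = sets (restrict_space borel \<Omega>)"
    and "\<And>j. j \<in> {1..N} \<Longrightarrow> continuous_on \<Omega> (\<phi> j)"
    and "\<And>j x. j \<in> {1..N} \<Longrightarrow> x \<in> \<Omega> \<Longrightarrow> \<bar>\<phi> j x\<bar> \<le> 1"
    and "r \<ge> 0"
    and "\<And>f. f \<in> F \<Longrightarrow> continuous_on \<Omega> f"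
    and "dist_A1r_inf \<Omega> r N \<phi> F < \<infinity>"
    and "1 \<le> v" and "2 * v \<le> N"
    and "1 \<le> m" and "\<And>j. j \<in> {1..m} \<Longrightarrow> \<xi> j \<in> \<Omega>"
  shows "sigma_w_L2 (2 * v) N \<phi> \<mu> m \<xi> F
           \<le> ereal (real v powr (- r - 1/2)) + dist_A1r_inf \<Omega> r N \<phi> F"
proof -
  note cpt = assms(1) and P = assms(2) and sp = assms(3) and sets = assms(4)
  define a where "a = real v powr (- r - 1/2)"
  have xi: "\<And>l. l \<in> {1..m} \<Longrightarrow> \<xi> l \<in> space \<mu>" using assms(13) sp by simp
  have x1: "\<xi> 1 \<in> \<Omega>" using assms(13)[of 1] assms(12) by simp
  have phib: "\<And>j. j \<in> {1..N} \<Longrightarrow> bm \<mu> (\<phi> j)"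
    by (rule cont_bm[OF cpt sp sets assms(5)])
  have phi1: "\<And>j x. j \<in> {1..N} \<Longrightarrow> x \<in> space \<mu> \<Longrightarrow> \<bar>\<phi> j x\<bar> \<le> 1"
    using assms(6) sp by simp
  have key: "(INF h\<in>Sigma_w (2 * v) N \<phi>. ereal (L2_mu_xi \<mu> m \<xi> (\<lambda>x. f x - h x)))
      \<le> ereal a + sup_norm \<Omega> (\<lambda>x. f x - g x)" if f: "f \<in> F" and g: "g \<in> A1r r N \<phi>" for f g
  proof -
    obtain h where h: "h \<in> Sigma_w (2 * v) N \<phi>" and bmg: "bm \<mu> g" and bmh: "bm \<mu> h"
      and L2gh: "L2_mu_xi \<mu> m \<xi> (\<lambda>x. g x - h x) \<le> a"
    proof -
      have "\<exists>h\<in>Sigma_w (2 * v) N \<phi>. bm \<mu> g \<and> bm \<mu> h \<and>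
           L2_mu_xi \<mu> m \<xi> (\<lambda>x. g x - h x) \<le> real v powr (- r - 1/2)"
        by (rule approx[OF P]) (use phib phi1 assms(7,10,11,12) xi g in auto)
      thus ?thesis using that unfolding a_def by blast
    qed
    have INFle: "(INF h\<in>Sigma_w (2 * v) N \<phi>. ereal (L2_mu_xi \<mu> m \<xi> (\<lambda>x. f x - h x)))
        \<le> ereal (L2_mu_xi \<mu> m \<xi> (\<lambda>x. f x - h x))" using h by (rule INF_lower)
    show ?thesis
    proof (cases "sup_norm \<Omega> (\<lambda>x. f x - g x) = \<infinity>")
      case True
      thus ?thesis by simp
    next
      case False
      have nn: "sup_norm \<Omega> (\<lambda>x. f x - g x) \<ge> 0" by (rule sup_norm_nonneg[OF x1])
      then obtain s where s: "sup_norm \<Omega> (\<lambda>x. f x - g x) = ereal s" "s \<ge> 0"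
        using False by (cases "sup_norm \<Omega> (\<lambda>x. f x - g x)") auto
      have bmf: "bm \<mu> f" by (rule cont_bm[OF cpt sp sets assms(8)[OF f]])
      have ub: "\<And>x. x \<in> space \<mu> \<Longrightarrow> \<bar>f x - g x\<bar> \<le> s"
        using sup_norm_bound[OF _ s(1)] sp by auto
      have "L2_mu_xi \<mu> m \<xi> (\<lambda>x. (f x - g x) + (g x - h x)) \<le> s + L2_mu_xi \<mu> m \<xi> (\<lambda>x. g x - h x)"
        by (rule L2_triangle[OF P bm_minus[OF bmf bmg] bm_minus[OF bmg bmh] s(2) ub xi assms(12)])
      hence "L2_mu_xi \<mu> m \<xi> (\<lambda>x. f x - h x) \<le> a + s" using L2gh by simp
      hence "ereal (L2_mu_xi \<mu> m \<xi> (\<lambda>x. f x - h x)) \<le> ereal a + sup_norm \<Omega> (\<lambda>x. f x - g x)"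
        using s(1) by simp
      thus ?thesis using INFle by (rule order_trans[rotated])
    qed
  qed
  have A1ne: "A1r r N \<phi> \<noteq> {}"
  proof -
    have "(\<lambda>x. \<Sum>j=1..N. 0 * \<phi> j x) \<in> A1r r N \<phi>"
      unfolding A1r_def by (rule CollectI, rule exI[of _ "\<lambda>_. 0"]) simp
    thus ?thesis by blast
  qed
  have perf: "(INF h\<in>Sigma_w (2 * v) N \<phi>. ereal (L2_mu_xi \<mu> m \<xi> (\<lambda>x. f x - h x)))
      \<le> ereal a + dist_A1r_inf \<Omega> r N \<phi> F" if f: "f \<in> F" for f
  proof -
    have "(INF h\<in>Sigma_w (2 * v) N \<phi>. ereal (L2_mu_xi \<mu> m \<xi> (\<lambda>x. f x - h x)))
        \<le> (INF g\<in>A1r r N \<phi>. ereal a + sup_norm \<Omega> (\<lambda>x. f x - g x))"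
      by (rule INF_greatest) (rule key[OF f])
    also have "\<dots> = ereal a + (INF g\<in>A1r r N \<phi>. sup_norm \<Omega> (\<lambda>x. f x - g x))"
      by (rule INF_ereal_add_right[OF A1ne]) (auto intro: sup_norm_nonneg[OF x1])
    also have "\<dots> \<le> ereal a + dist_A1r_inf \<Omega> r N \<phi> F"
      unfolding dist_A1r_inf_def by (intro add_left_mono SUP_upper f)
    finally show ?thesis .
  qed
  show ?thesis unfolding sigma_w_L2_def a_def[symmetric]
    by (rule SUP_least) (rule perf)
qed

end
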